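(* Let $(P,w)$ be a naturally labeled poset with $n$ elements and $\alpha$ a composition of $n$ with $\ell$ parts. For $\sigma\in\mathcal L^*_\alpha(P,w)$ define $f_\sigma:P\to[\ell]$ by $f_\sigma(x)=i$ for $x\in P_i^\alpha(\sigma)$. Then $\sigma\mapsto f_\sigma$ is a bijection from $\mathcal L^*_\alpha(P,w)$ to $\mathcal O^*_\alpha(P)$.
   Context: Compositions: $\alpha=(\alpha_1,\dots,\alpha_\ell)\vDash n$, blocks $B_i(\alpha)=\{\alpha_1+\dots+\alpha_{i-1}+1,\dots,\alpha_1+\dots+\alpha_i\}$. A labeled poset $(P,w)$ is a finite poset with bijection $w:P\to[n]$, naturally labeled if $x<_Py\Rightarrow w(x)<w(y)$. $\mathcal L(P,w)=\{\sigma\in\mathfrak S_n:\sigma^{-1}(w(x))<\sigma^{-1}(w(y))\text{ whenever }x<_Py\}$. $\sigma$ is $\alpha$-unimodal if on each block $[a,b]=B_i(\alpha)$, $\sigma_a>\dots>\sigma_k<\dots<\sigma_b$ for some $k$. $P_i^\alpha(\sigma)=\{w^{-1}(\sigma_j):j\in B_i(\alpha)\}$ with induced order. $\mathcal L^*_\alpha(P,w)$ is the set of $\alpha$-unimodal $\sigma\in\mathcal L(P,w)$ with every $P_i^\alpha(\sigma)$ having a unique minimal element. $\mathcal O^*_\alpha(P)$ is the set of surjections $f:P\to[\ell]$ with $x\le_Py\Rightarrow f(x)\le f(y)$, $|f^{-1}(i)|=\alpha_i$ for all $i$, and each fiber $f^{-1}(i)$ (induced subposet) having a unique minimal element. *)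

theory Defs
  imports "HOL-Library.FuncSet" "HOL-Combinatorics.Permutations"
begin

definition is_poset :: "'a set \<Rightarrow> ('a \<Rightarrow> 'a \<Rightarrow> bool) \<Rightarrow> bool" where
  "is_poset P le \<longleftrightarrow> finite P \<and>
     (\<forall>x\<in>P. le x x) \<and>
     (\<forall>x\<in>P. \<forall>y\<in>P. le x y \<and> le y x \<longrightarrow> x = y) \<and>
     (\<forall>x\<in>P. \<forall>y\<in>P. \<forall>z\<in>P. le x y \<and> le y z \<longrightarrow> le x z)"

definition labeled_poset :: "'a set \<Rightarrow> ('a \<Rightarrow> 'a \<Rightarrow> bool) \<Rightarrow> ('a \<Rightarrow> nat) \<Rightarrow> nat \<Rightarrow> bool" where
  "labeled_poset P le w n \<longleftrightarrow> is_poset P le \<and> bij_betw w P {1..n}"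

definition naturally_labeled :: "'a set \<Rightarrow> ('a \<Rightarrow> 'a \<Rightarrow> bool) \<Rightarrow> ('a \<Rightarrow> nat) \<Rightarrow> bool" where
  "naturally_labeled P le w \<longleftrightarrow> (\<forall>x\<in>P. \<forall>y\<in>P. le x y \<and> x \<noteq> y \<longrightarrow> w x < w y)"

text \<open>A composition of n: list of positive parts summing to n; part i (1-based) is alpha ! (i-1).\<close>
definition is_composition :: "nat list \<Rightarrow> nat \<Rightarrow> bool" where
  "is_composition alpha n \<longleftrightarrow> (\<forall>a\<in>set alpha. 0 < a) \<and> sum_list alpha = n"

definition block :: "nat list \<Rightarrow> nat \<Rightarrow> nat set" where
  "block alpha i = {sum_list (take (i - 1) alpha) + 1 .. sum_list (take i alpha)}"

text \<open>Linear extensions L(P,w), permutations of [n] given as functions nat => nat, sigma j = sigma_j.\<close>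
definition lin_ext :: "'a set \<Rightarrow> ('a \<Rightarrow> 'a \<Rightarrow> bool) \<Rightarrow> ('a \<Rightarrow> nat) \<Rightarrow> nat \<Rightarrow> (nat \<Rightarrow> nat) set" where
  "lin_ext P le w n = {\<sigma>. \<sigma> permutes {1..n} \<and>
     (\<forall>x\<in>P. \<forall>y\<in>P. le x y \<and> x \<noteq> y \<longrightarrow> inv \<sigma> (w x) < inv \<sigma> (w y))}"

definition alpha_unimodal :: "nat list \<Rightarrow> (nat \<Rightarrow> nat) \<Rightarrow> bool" where
  "alpha_unimodal alpha \<sigma> \<longleftrightarrow>
     (\<forall>i\<in>{1..length alpha}.
        \<exists>k\<in>block alpha i.
          (\<forall>j. j \<in> block alpha i \<and> j + 1 \<in> block alpha i \<and> j < k \<longrightarrow> \<sigma> j > \<sigma> (j + 1)) \<and>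
          (\<forall>j. j \<in> block alpha i \<and> j + 1 \<in> block alpha i \<and> k \<le> j \<longrightarrow> \<sigma> j < \<sigma> (j + 1)))"

definition part_set :: "'a set \<Rightarrow> ('a \<Rightarrow> nat) \<Rightarrow> nat list \<Rightarrow> (nat \<Rightarrow> nat) \<Rightarrow> nat \<Rightarrow> 'a set" where
  "part_set P w alpha \<sigma> i = {x\<in>P. \<exists>j\<in>block alpha i. w x = \<sigma> j}"

definition unique_minimal :: "('a \<Rightarrow> 'a \<Rightarrow> bool) \<Rightarrow> 'a set \<Rightarrow> bool" where
  "unique_minimal le S \<longleftrightarrow> (\<exists>!m. m \<in> S \<and> (\<forall>y\<in>S. le y m \<longrightarrow> y = m))"

definition Lstar :: "'a set \<Rightarrow> ('a \<Rightarrow> 'a \<Rightarrow> bool) \<Rightarrow> ('a \<Rightarrow> nat) \<Rightarrow> nat \<Rightarrow> nat list \<Rightarrow> (nat \<Rightarrow> nat) set" where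
  "Lstar P le w n alpha = {\<sigma> \<in> lin_ext P le w n. alpha_unimodal alpha \<sigma> \<and>
     (\<forall>i\<in>{1..length alpha}. unique_minimal le (part_set P w alpha \<sigma> i))}"

definition Ostar :: "'a set \<Rightarrow> ('a \<Rightarrow> 'a \<Rightarrow> bool) \<Rightarrow> nat list \<Rightarrow> ('a \<Rightarrow> nat) set" where
  "Ostar P le alpha = {f \<in> P \<rightarrow>\<^sub>E {1..length alpha}.
     f ` P = {1..length alpha} \<and>
     (\<forall>x\<in>P. \<forall>y\<in>P. le x y \<longrightarrow> f x \<le> f y) \<and>
     (\<forall>i\<in>{1..length alpha}. card {x\<in>P. f x = i} = alpha ! (i - 1)) \<and>
     (\<forall>i\<in>{1..length alpha}. unique_minimal le {x\<in>P. f x = i})}"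

definition f_sigma :: "'a set \<Rightarrow> ('a \<Rightarrow> nat) \<Rightarrow> nat list \<Rightarrow> (nat \<Rightarrow> nat) \<Rightarrow> 'a \<Rightarrow> nat" where
  "f_sigma P w alpha \<sigma> = restrict (\<lambda>x. THE i. i \<in> {1..length alpha} \<and> x \<in> part_set P w alpha \<sigma> i) P"

end

theory Submission
  imports Defs
begin

lemma lex_key:
  fixes a b c d m :: nat
  assumes "a < m" "b < m"
  shows "(c*m + a < d*m + b) \<longleftrightarrow> (c < d \<or> (c = d \<and> a < b))"
proof
  assume h: "c*m + a < d*m + b"
  show "c < d \<or> (c = d \<and> a < b)"
  proof (rule ccontr)
    assume "\<not> ?thesis"
    then have "d < c \<or> (c = d \<and> b \<le> a)" by auto
    then show False
    proof
      assume "d < c"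
      then have "Suc d * m \<le> c * m" by (intro mult_le_mono1) auto
      then show False using h assms by simp
    qed (use h in auto)
  qed
next
  assume "c < d \<or> (c = d \<and> a < b)"
  then show "c*m + a < d*m + b"
  proof
    assume "c < d"
    then have "Suc c * m \<le> d * m" by (intro mult_le_mono1) auto
    then show ?thesis using assms by simp
  qed auto
qed

locale ctx =
  fixes P :: "'a set" and le :: "'a \<Rightarrow> 'a \<Rightarrow> bool" and w :: "'a \<Rightarrow> nat"
    and n :: nat and alpha :: "nat list"
  assumes lp: "labeled_poset P le w n"
    and nl: "naturally_labeled P le w"
    and comp: "is_composition alpha n"
begin

abbreviation "l \<equiv> length alpha"
definition S where "S i = sum_list (take i alpha)"

lemma posetP: "is_poset P le" using lp unfolding labeled_poset_def by (rule conjunct1)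
lemma finP: "finite P" using posetP unfolding is_poset_def by (rule conjunct1)
lemma refl: "x \<in> P \<Longrightarrow> le x x" using posetP unfolding is_poset_def by blast
lemma trans: "x \<in> P \<Longrightarrow> y \<in> P \<Longrightarrow> z \<in> P \<Longrightarrow> le x y \<Longrightarrow> le y z \<Longrightarrow> le x z"
proof -
  have "\<forall>x\<in>P. \<forall>y\<in>P. \<forall>z\<in>P. le x y \<and> le y z \<longrightarrow> le x z"
    using posetP unfolding is_poset_def by (elim conjE)
  then show "x \<in> P \<Longrightarrow> y \<in> P \<Longrightarrow> z \<in> P \<Longrightarrow> le x y \<Longrightarrow> le y z \<Longrightarrow> le x z" by blast
qed
lemma bijw: "bij_betw w P {1..n}" using lp unfolding labeled_poset_def by (rule conjunct2)
lemma injw: "inj_on w P" using bijw by (simp add: bij_betw_def)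
lemma wP: "w ` P = {1..n}" using bijw by (simp add: bij_betw_def)
lemma cardP: "card P = n" using bij_betw_same_card[OF bijw] by simp
lemma natl: "x \<in> P \<Longrightarrow> y \<in> P \<Longrightarrow> le x y \<Longrightarrow> x \<noteq> y \<Longrightarrow> w x < w y"
  using nl by (simp add: naturally_labeled_def)
lemma wle: "x \<in> P \<Longrightarrow> w x < n + 1"
proof -
  assume "x \<in> P" then have "w x \<in> {1..n}" using wP by blast
  then show ?thesis by simp
qed

lemma S_mono: "i \<le> i' \<Longrightarrow> S i \<le> S i'"
proof -
  assume "i \<le> i'"
  then obtain d where "i' = i + d" using le_Suc_ex by blast
  then show ?thesis by (simp add: S_def take_add)
qed
lemma S_Suc: "i < l \<Longrightarrow> S (Suc i) = S i + alpha!i"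
  by (simp add: S_def take_Suc_conv_app_nth)
lemma alpha_pos: "i < l \<Longrightarrow> alpha!i > 0"
proof -
  assume "i < l"
  then have "alpha!i \<in> set alpha" by (rule nth_mem)
  then show ?thesis using comp by (simp add: is_composition_def)
qed
lemma S_l: "S l = n" using comp by (simp add: S_def is_composition_def)
lemma S_0: "S 0 = 0" by (simp add: S_def)
lemma block_eq: "block alpha i = {S (i-1)+1 .. S i}" by (simp add: block_def S_def)

lemma S_im: "i \<in> {1..l} \<Longrightarrow> S i = S (i-1) + alpha!(i-1)"
  using S_Suc[of "i-1"] by auto

lemma card_block: "i\<in>{1..l} \<Longrightarrow> card (block alpha i) = alpha!(i-1)"
proof -
  assume "i\<in>{1..l}"
  from S_im[OF this] have "S i = S (i-1) + alpha!(i-1)" .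
  then show ?thesis by (simp add: block_eq)
qed
lemma block_sub: "i\<in>{1..l} \<Longrightarrow> block alpha i \<subseteq> {1..n}"
  using S_mono[of i l] S_l by (auto simp: block_eq)
lemma block_ne: "i\<in>{1..l} \<Longrightarrow> S (i-1)+1 \<in> block alpha i"
proof -
  assume i: "i\<in>{1..l}"
  then have "i - 1 < l" by auto
  then have "alpha!(i-1) > 0" by (rule alpha_pos)
  then show ?thesis using S_im[OF i] by (simp add: block_eq)
qed
lemma block_less: "1 \<le> i \<Longrightarrow> i < i' \<Longrightarrow> j \<in> block alpha i \<Longrightarrow> j' \<in> block alpha i' \<Longrightarrow> j < j'"
proof -
  assume a: "1 \<le> i" "i < i'" "j \<in> block alpha i" "j' \<in> block alpha i'"
  then have "S i \<le> S (i'-1)" by (intro S_mono) auto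
  then show ?thesis using a by (auto simp: block_eq)
qed
lemma block_uniq: "i\<in>{1..l} \<Longrightarrow> i'\<in>{1..l} \<Longrightarrow> j\<in>block alpha i \<Longrightarrow> j \<in> block alpha i' \<Longrightarrow> i = i'"
proof -
  assume a: "i\<in>{1..l}" "i'\<in>{1..l}" "j\<in>block alpha i" "j \<in> block alpha i'"
  show ?thesis
  proof (rule ccontr)
    assume "i \<noteq> i'"
    then have "i < i' \<or> i' < i" by auto
    then show False using block_less[of i i' j j] block_less[of i' i j j] a by auto
  qed
qed
lemma block_ex: "j \<in> {1..n} \<Longrightarrow> \<exists>i\<in>{1..l}. j \<in> block alpha i"
proof -
  assume j: "j \<in> {1..n}"
  define i where "i = (LEAST i. j \<le> S i)"
  have ex: "j \<le> S l" using j S_l by simp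
  have i1: "j \<le> S i" unfolding i_def by (rule LeastI[of _ l]) (rule ex)
  have i2: "i \<le> l" unfolding i_def by (rule Least_le) (rule ex)
  have i0: "i \<noteq> 0"
  proof
    assume "i = 0" then show False using i1 j S_0 by simp
  qed
  have "\<not> j \<le> S (i-1)" unfolding i_def by (rule not_less_Least) (use i0 i_def in auto)
  then show ?thesis using i0 i1 i2 by (auto simp: block_eq intro!: bexI[of _ i])
qed

definition blk where "blk j = (THE i. i\<in>{1..l} \<and> j \<in> block alpha i)"
lemma blk: "j \<in> {1..n} \<Longrightarrow> blk j \<in> {1..l} \<and> j \<in> block alpha (blk j)"
proof -
  assume j: "j \<in> {1..n}"
  obtain i where i: "i\<in>{1..l}" "j \<in> block alpha i" using block_ex[OF j] by blast
  have "\<exists>!i. i\<in>{1..l} \<and> j \<in> block alpha i"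
    using i block_uniq by blast
  then show ?thesis unfolding blk_def by (rule theI')
qed
lemma blk_eq: "i \<in> {1..l} \<Longrightarrow> j \<in> block alpha i \<Longrightarrow> blk j = i"
  unfolding blk_def by (rule the_equality) (use block_uniq in blast)+
lemma blk_less: "j \<in> {1..n} \<Longrightarrow> j' \<in> {1..n} \<Longrightarrow> blk j < blk j' \<Longrightarrow> j < j'"
proof -
  assume a: "j \<in> {1..n}" "j' \<in> {1..n}" "blk j < blk j'"
  show ?thesis using blk[OF a(1)] blk[OF a(2)] a(3) block_less[of "blk j" "blk j'" j j'] by auto
qed
lemma blk_mono: "j \<in> {1..n} \<Longrightarrow> j' \<in> {1..n} \<Longrightarrow> j \<le> j' \<Longrightarrow> blk j \<le> blk j'"
  using blk_less[of j' j] by (meson leD leI)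

lemma pos_bij: "\<sigma> permutes {1..n} \<Longrightarrow> bij_betw (\<lambda>x. inv \<sigma> (w x)) P {1..n}"
proof -
  assume p: "\<sigma> permutes {1..n}"
  have "bij_betw (inv \<sigma>) {1..n} {1..n}" using permutes_inv[OF p] by (rule permutes_imp_bij)
  from bij_betw_trans[OF bijw this] show ?thesis by (simp add: comp_def)
qed

lemma pos_in: "\<sigma> permutes {1..n} \<Longrightarrow> x \<in> P \<Longrightarrow> inv \<sigma> (w x) \<in> {1..n}"
  using pos_bij bij_betwE by blast

lemma pos_onto: "\<sigma> permutes {1..n} \<Longrightarrow> j \<in> {1..n} \<Longrightarrow> \<exists>x\<in>P. inv \<sigma> (w x) = j"
proof -
  assume p: "\<sigma> permutes {1..n}" and j: "j \<in> {1..n}"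
  have "(\<lambda>x. inv \<sigma> (w x)) ` P = {1..n}" using pos_bij[OF p] by (simp add: bij_betw_def)
  then show ?thesis using j by (metis imageE)
qed

lemma sig_pos: "\<sigma> permutes {1..n} \<Longrightarrow> \<sigma> (inv \<sigma> y) = y"
  using permutes_inverses(1) by metis

lemma part_set_eq: "\<sigma> permutes {1..n} \<Longrightarrow> part_set P w alpha \<sigma> i = {x\<in>P. inv \<sigma> (w x) \<in> block alpha i}"
proof -
  assume p: "\<sigma> permutes {1..n}"
  have "\<And>x. (\<exists>j\<in>block alpha i. w x = \<sigma> j) \<longleftrightarrow> inv \<sigma> (w x) \<in> block alpha i"
    using permutes_inv_eq[OF p] by metis
  then show ?thesis by (simp add: part_set_def)
qed

lemma fsig_eq: "\<sigma> permutes {1..n} \<Longrightarrow> x \<in> P \<Longrightarrow> f_sigma P w alpha \<sigma> x = blk (inv \<sigma> (w x))"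
proof -
  assume p: "\<sigma> permutes {1..n}" and x: "x \<in> P"
  note b = blk[OF pos_in[OF p x]]
  have "(THE i. i\<in>{1..l} \<and> x \<in> part_set P w alpha \<sigma> i) = blk (inv \<sigma> (w x))"
  proof (rule the_equality)
    show "blk (inv \<sigma> (w x)) \<in> {1..l} \<and> x \<in> part_set P w alpha \<sigma> (blk (inv \<sigma> (w x)))"
      using b x by (simp add: part_set_eq[OF p])
  next
    fix i assume "i\<in>{1..l} \<and> x \<in> part_set P w alpha \<sigma> i"
    then have "i\<in>{1..l}" "inv \<sigma> (w x) \<in> block alpha i" by (auto simp: part_set_eq[OF p])
    then show "i = blk (inv \<sigma> (w x))" using b block_uniq by blast
  qed
  then show ?thesis using x by (simp add: f_sigma_def)
qed

lemma fiber_eq: "\<sigma> permutes {1..n} \<Longrightarrow> i \<in> {1..l} \<Longrightarrow>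
   {x\<in>P. f_sigma P w alpha \<sigma> x = i} = part_set P w alpha \<sigma> i"
proof -
  assume p: "\<sigma> permutes {1..n}" and i: "i \<in> {1..l}"
  have "\<And>x. x \<in> P \<Longrightarrow> f_sigma P w alpha \<sigma> x = i \<longleftrightarrow> inv \<sigma> (w x) \<in> block alpha i"
  proof -
    fix x assume x: "x \<in> P"
    note b = blk[OF pos_in[OF p x]]
    show "f_sigma P w alpha \<sigma> x = i \<longleftrightarrow> inv \<sigma> (w x) \<in> block alpha i"
      using b blk_eq[OF i] fsig_eq[OF p x] by metis
  qed
  then show ?thesis by (auto simp: part_set_eq[OF p])
qed

lemma least_min:
  assumes Q: "Q \<subseteq> P" and um: "unique_minimal le Q" and m: "m \<in> Q" "\<forall>y\<in>Q. le y m \<longrightarrow> y = m"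
    and y: "y \<in> Q"
  shows "le m y"
proof -
  define Z where "Z = {z\<in>Q. le z y}"
  have fin: "finite Z" using finite_subset[OF _ finP] Q by (auto simp: Z_def)
  have yZ: "y \<in> Z" using y Q refl by (auto simp: Z_def)
  have "Min (w ` Z) \<in> w ` Z" using fin yZ by (intro Min_in) auto
  then obtain z where z: "z \<in> Z" "w z = Min (w ` Z)" by auto
  have zmin: "\<forall>u\<in>Q. le u z \<longrightarrow> u = z"
  proof (intro ballI impI)
    fix u assume u: "u \<in> Q" "le u z"
    have zQ: "z \<in> Q" "le z y" using z by (auto simp: Z_def)
    have "le u y" using trans[of u z y] u zQ Q y by auto
    then have "u \<in> Z" using u by (simp add: Z_def)
    then have "w z \<le> w u" using z fin by simp
    show "u = z"
    proof (rule ccontr)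
      assume "u \<noteq> z"
      then have "w u < w z" using natl[of u z] u zQ Q by auto
      with \<open>w z \<le> w u\<close> show False by simp
    qed
  qed
  have "z \<in> Q" using z by (simp add: Z_def)
  then have "z = m" using um m zmin unfolding unique_minimal_def by blast
  then show ?thesis using z by (simp add: Z_def)
qed

lemma Lstar_D:
  assumes "\<sigma> \<in> Lstar P le w n alpha"
  shows "\<sigma> permutes {1..n}"
    and "\<And>x y. x\<in>P \<Longrightarrow> y\<in>P \<Longrightarrow> le x y \<Longrightarrow> x \<noteq> y \<Longrightarrow> inv \<sigma> (w x) < inv \<sigma> (w y)"
    and "alpha_unimodal alpha \<sigma>"
    and "\<And>i. i\<in>{1..l} \<Longrightarrow> unique_minimal le (part_set P w alpha \<sigma> i)"
  using assms by (auto simp: Lstar_def lin_ext_def)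

lemma incr_block:
  assumes s: "\<sigma> \<in> Lstar P le w n alpha" and i: "i \<in> {1..l}"
    and j: "j \<in> block alpha i" and j': "j' \<in> block alpha i" and jj: "j < j'"
  shows "\<sigma> j < \<sigma> j'"
proof -
  note p = Lstar_D(1)[OF s]
  define B where "B = block alpha i"
  define Q where "Q = part_set P w alpha \<sigma> i"
  have Q: "Q = {x\<in>P. inv \<sigma> (w x) \<in> B}" unfolding Q_def B_def by (rule part_set_eq[OF p])
  have QP: "Q \<subseteq> P" using Q by auto
  have uq: "unique_minimal le Q" unfolding Q_def by (rule Lstar_D(4)[OF s i])
  then obtain m where m: "m \<in> Q" "\<forall>y\<in>Q. le y m \<longrightarrow> y = m" unfolding unique_minimal_def by blast
  have mle: "\<And>y. y \<in> Q \<Longrightarrow> le m y" using least_min[OF QP uq m] .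
  define a where "a = S (i-1) + 1"
  have aB: "a \<in> B" unfolding a_def B_def by (rule block_ne[OF i])
  have Bsub: "B \<subseteq> {1..n}" unfolding B_def by (rule block_sub[OF i])
  have Bint: "B = {a .. S i}" unfolding B_def a_def by (simp add: block_eq)
  have mP: "m \<in> P" "inv \<sigma> (w m) \<in> B" using m Q by auto
  have pm: "inv \<sigma> (w m) = a"
  proof -
    obtain z where z: "z \<in> P" "inv \<sigma> (w z) = a" using pos_onto[OF p] aB Bsub by blast
    then have "z \<in> Q" using Q aB by auto
    then have "le m z" by (rule mle)
    then have "inv \<sigma> (w m) \<le> inv \<sigma> (w z)"
      using Lstar_D(2)[OF s, of m z] z mP by (cases "m = z") auto
    then show ?thesis using z mP Bint by auto
  qed
  have sm: "\<sigma> a = w m" using pm sig_pos[OF p, of "w m"] by simp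
  have inc: "\<And>j. j\<in>B \<Longrightarrow> j+1 \<in> B \<Longrightarrow> \<sigma> j < \<sigma> (j+1)"
  proof -
    obtain k where k: "k \<in> B"
      and dec: "\<forall>j. j \<in> B \<and> j + 1 \<in> B \<and> j < k \<longrightarrow> \<sigma> j > \<sigma> (j + 1)"
      and incr: "\<forall>j. j \<in> B \<and> j + 1 \<in> B \<and> k \<le> j \<longrightarrow> \<sigma> j < \<sigma> (j + 1)"
      using Lstar_D(3)[OF s] i unfolding alpha_unimodal_def B_def by blast
    have ka: "k = a"
    proof (rule ccontr)
      assume "k \<noteq> a"
      then have ak: "a < k" using k Bint by auto
      then have a1: "a + 1 \<in> B" using k Bint by auto
      then have "\<sigma> (a+1) < \<sigma> a" using dec aB ak by blast
      obtain y where y: "y \<in> P" "inv \<sigma> (w y) = a+1" using pos_onto[OF p] a1 Bsub by blast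
      have sy: "\<sigma> (a+1) = w y" using y sig_pos[OF p, of "w y"] by simp
      have "y \<in> Q" using Q y a1 by auto
      then have "le m y" by (rule mle)
      moreover have "y \<noteq> m" using y pm by auto
      ultimately have "w m < w y" using natl[of m y] y mP by auto
      with \<open>\<sigma> (a+1) < \<sigma> a\<close> sy sm show False by simp
    qed
    fix j assume "j \<in> B" "j+1 \<in> B"
    then show "\<sigma> j < \<sigma> (j+1)" using incr ka Bint by auto
  qed
  have gen: "\<And>d. j + Suc d \<in> B \<Longrightarrow> \<sigma> j < \<sigma> (j + Suc d)"
  proof -
    fix d show "j + Suc d \<in> B \<Longrightarrow> \<sigma> j < \<sigma> (j + Suc d)"
    proof (induction d)
      case 0
      then show ?case using inc[of j] j B_def by simp
    next
      case (Suc d)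
      have jd: "j + Suc d \<in> B" using Suc.prems j Bint B_def by auto
      have "\<sigma> (j + Suc d) < \<sigma> (j + Suc d + 1)" using inc[OF jd] Suc.prems by simp
      then show ?case using Suc.IH[OF jd] by simp
    qed
  qed
  have "j' = j + Suc (j' - j - 1)" using jj by simp
  then show ?thesis using gen[of "j' - j - 1"] j' B_def by metis
qed

definition key :: "('a \<Rightarrow> nat) \<Rightarrow> 'a \<Rightarrow> nat" where
  "key f x = f x * (n+1) + w x"

lemma key_less: "x \<in> P \<Longrightarrow> y \<in> P \<Longrightarrow> key f x < key f y \<longleftrightarrow> (f x < f y \<or> (f x = f y \<and> w x < w y))"
proof -
  assume "x \<in> P" "y \<in> P"
  then have a: "w x < n+1" "w y < n+1" using wle by auto
  show ?thesis unfolding key_def by (rule lex_key[OF a])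
qed

lemma key_inj: "inj_on (key f) P"
proof (rule inj_onI)
  fix x y assume xy: "x \<in> P" "y \<in> P" "key f x = key f y"
  have "key f x mod (n+1) = w x" unfolding key_def using wle[OF xy(1)] by (simp only: mod_mult_self3 mod_less)
  moreover have "key f y mod (n+1) = w y" unfolding key_def using wle[OF xy(2)] by (simp only: mod_mult_self3 mod_less)
  ultimately have "w x = w y" using xy(3) by metis
  then show "x = y" using injw xy inj_onD by metis
qed

lemma rank:
  fixes k :: "'a \<Rightarrow> nat"
  assumes inj: "inj_on k P" and g: "bij_betw g P {1..n}"
    and mono: "\<And>x y. x\<in>P \<Longrightarrow> y\<in>P \<Longrightarrow> k x < k y \<Longrightarrow> g x < g y" and x: "x \<in> P"
  shows "g x = 1 + card {y\<in>P. k y < k x}"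
proof -
  have eq: "{y\<in>P. k y < k x} = {y\<in>P. g y < g x}"
  proof (intro Collect_cong conj_cong refl iffI)
    fix y assume y: "y \<in> P"
    show "k y < k x \<Longrightarrow> g y < g x" using mono y x by blast
    assume gy: "g y < g x"
    show "k y < k x"
    proof (rule ccontr)
      assume "\<not> k y < k x"
      then have "k x < k y \<or> k x = k y" by auto
      then show False
      proof
        assume "k x < k y" then show False using mono[OF x y] gy by simp
      next
        assume "k x = k y" then have "x = y" using inj x y inj_onD by metis
        then show False using gy by simp
      qed
    qed
  qed
  have gx: "g x \<in> {1..n}" using g x bij_betwE by blast
  have img: "g ` {y\<in>P. g y < g x} = {1..<g x}"
  proof
    show "g ` {y\<in>P. g y < g x} \<subseteq> {1..<g x}" using g bij_betwE by fastforce
    show "{1..<g x} \<subseteq> g ` {y\<in>P. g y < g x}"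
    proof
      fix j assume j: "j \<in> {1..<g x}"
      then have "j \<in> {1..n}" using gx by auto
      then have "j \<in> g ` P" using g by (simp add: bij_betw_def)
      then obtain y where "y \<in> P" "j = g y" by auto
      then show "j \<in> g ` {y\<in>P. g y < g x}" using j by auto
    qed
  qed
  have "inj_on g {y\<in>P. g y < g x}" using g by (auto simp: bij_betw_def intro: inj_on_subset)
  then have "card {y\<in>P. g y < g x} = card {1..<g x}" using card_image img by metis
  then show ?thesis using eq gx by simp
qed

lemma Lstar_kmono:
  assumes s: "\<sigma> \<in> Lstar P le w n alpha" and x: "x \<in> P" and y: "y \<in> P"
    and k: "key (f_sigma P w alpha \<sigma>) x < key (f_sigma P w alpha \<sigma>) y"
  shows "inv \<sigma> (w x) < inv \<sigma> (w y)"
proof -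
  note p = Lstar_D(1)[OF s]
  let ?F = "f_sigma P w alpha \<sigma>"
  have Fx: "?F x = blk (inv \<sigma> (w x))" by (rule fsig_eq[OF p x])
  have Fy: "?F y = blk (inv \<sigma> (w y))" by (rule fsig_eq[OF p y])
  note bx = blk[OF pos_in[OF p x]] and by' = blk[OF pos_in[OF p y]]
  from k have "?F x < ?F y \<or> (?F x = ?F y \<and> w x < w y)" using key_less[OF x y] by simp
  then show ?thesis
  proof
    assume "?F x < ?F y"
    then show ?thesis using blk_less[OF pos_in[OF p x] pos_in[OF p y]] Fx Fy by simp
  next
    assume h: "?F x = ?F y \<and> w x < w y"
    define i where "i = ?F x"
    have i: "i \<in> {1..l}" using bx Fx i_def by simp
    have bxi: "inv \<sigma> (w x) \<in> block alpha i" using bx Fx i_def by simp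
    have byi: "inv \<sigma> (w y) \<in> block alpha i" using by' Fy h i_def by simp
    show ?thesis
    proof (rule ccontr)
      assume "\<not> ?thesis"
      then have "inv \<sigma> (w y) < inv \<sigma> (w x) \<or> inv \<sigma> (w y) = inv \<sigma> (w x)" by auto
      then show False
      proof
        assume "inv \<sigma> (w y) < inv \<sigma> (w x)"
        from incr_block[OF s i byi bxi this] have "w y < w x" using sig_pos[OF p] by simp
        then show False using h by simp
      next
        assume "inv \<sigma> (w y) = inv \<sigma> (w x)"
        then have "w y = w x" using sig_pos[OF p] by metis
        then show False using h by simp
      qed
    qed
  qed
qed

lemma Lstar_pos:
  assumes s: "\<sigma> \<in> Lstar P le w n alpha" and x: "x \<in> P"
  shows "inv \<sigma> (w x) = 1 + card {y\<in>P. key (f_sigma P w alpha \<sigma>) y < key (f_sigma P w alpha \<sigma>) x}"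
  by (rule rank[OF key_inj pos_bij[OF Lstar_D(1)[OF s]] _ x]) (rule Lstar_kmono[OF s])

lemma sig_det:
  assumes s1: "\<sigma>1 \<in> Lstar P le w n alpha" and s2: "\<sigma>2 \<in> Lstar P le w n alpha"
    and eq: "f_sigma P w alpha \<sigma>1 = f_sigma P w alpha \<sigma>2"
  shows "\<sigma>1 = \<sigma>2"
proof
  fix j
  note p1 = Lstar_D(1)[OF s1] and p2 = Lstar_D(1)[OF s2]
  show "\<sigma>1 j = \<sigma>2 j"
  proof (cases "j \<in> {1..n}")
    case True
    then obtain x where x: "x \<in> P" "inv \<sigma>1 (w x) = j" using pos_onto[OF p1] by blast
    have "inv \<sigma>2 (w x) = j" using x Lstar_pos[OF s1 x(1)] Lstar_pos[OF s2 x(1)] eq by simp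
    then show ?thesis using x sig_pos[OF p1, of "w x"] sig_pos[OF p2, of "w x"] by simp
  next
    case False
    then show ?thesis using p1 p2 permutes_not_in by metis
  qed
qed

lemma card_preimage:
  assumes g: "bij_betw g P T" and B: "B \<subseteq> T"
  shows "card {x\<in>P. g x \<in> B} = card B"
proof -
  have "inj_on g {x\<in>P. g x \<in> B}" using g by (auto simp: bij_betw_def intro: inj_on_subset)
  moreover have "g ` {x\<in>P. g x \<in> B} = B"
  proof
    show "g ` {x\<in>P. g x \<in> B} \<subseteq> B" by auto
    show "B \<subseteq> g ` {x\<in>P. g x \<in> B}"
    proof
      fix b assume b: "b \<in> B"
      then have "b \<in> g ` P" using B g by (auto simp: bij_betw_def)
      then show "b \<in> g ` {x\<in>P. g x \<in> B}" using b by auto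
    qed
  qed
  ultimately show ?thesis using card_image by metis
qed

lemma Lstar_to_Ostar:
  assumes s: "\<sigma> \<in> Lstar P le w n alpha"
  shows "f_sigma P w alpha \<sigma> \<in> Ostar P le alpha"
proof -
  note p = Lstar_D(1)[OF s]
  let ?F = "f_sigma P w alpha \<sigma>"
  have Fx: "\<And>x. x \<in> P \<Longrightarrow> ?F x = blk (inv \<sigma> (w x))" by (rule fsig_eq[OF p])
  have Frange: "\<And>x. x \<in> P \<Longrightarrow> ?F x \<in> {1..l}" using Fx blk pos_in[OF p] by metis
  have ext: "?F \<in> extensional P" by (simp add: f_sigma_def)
  have c1: "?F \<in> P \<rightarrow>\<^sub>E {1..l}" using Frange ext by (simp add: PiE_iff)
  have c2: "?F ` P = {1..l}"
  proof
    show "?F ` P \<subseteq> {1..l}" using Frange by auto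
    show "{1..l} \<subseteq> ?F ` P"
    proof
      fix i assume i: "i \<in> {1..l}"
      have a: "S (i-1)+1 \<in> {1..n}" using block_ne[OF i] block_sub[OF i] by auto
      obtain x where x: "x \<in> P" "inv \<sigma> (w x) = S (i-1)+1" using pos_onto[OF p a] by blast
      have "?F x = i" using Fx[OF x(1)] x(2) blk_eq[OF i block_ne[OF i]] by simp
      then show "i \<in> ?F ` P" using x by force
    qed
  qed
  have c3: "\<forall>x\<in>P. \<forall>y\<in>P. le x y \<longrightarrow> ?F x \<le> ?F y"
  proof (intro ballI impI)
    fix x y assume xy: "x \<in> P" "y \<in> P" "le x y"
    show "?F x \<le> ?F y"
    proof (cases "x = y")
      case False
      then have "inv \<sigma> (w x) < inv \<sigma> (w y)" using Lstar_D(2)[OF s] xy by blast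
      then show ?thesis using blk_mono[OF pos_in[OF p xy(1)] pos_in[OF p xy(2)]] Fx xy by simp
    qed simp
  qed
  have c4: "\<forall>i\<in>{1..l}. card {x\<in>P. ?F x = i} = alpha ! (i - 1)"
  proof
    fix i assume i: "i \<in> {1..l}"
    have "card {x\<in>P. ?F x = i} = card {x\<in>P. inv \<sigma> (w x) \<in> block alpha i}"
      using fiber_eq[OF p i] part_set_eq[OF p] by simp
    also have "\<dots> = card (block alpha i)"
      by (rule card_preimage[OF pos_bij[OF p] block_sub[OF i]])
    finally show "card {x\<in>P. ?F x = i} = alpha ! (i - 1)" using card_block[OF i] by simp
  qed
  have c5: "\<forall>i\<in>{1..l}. unique_minimal le {x\<in>P. ?F x = i}"
    using fiber_eq[OF p] Lstar_D(4)[OF s] by simp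
  show ?thesis unfolding Ostar_def using c1 c2 c3 c4 c5 by blast
qed

lemma Ostar_surj:
  assumes f: "f \<in> Ostar P le alpha"
  shows "\<exists>\<sigma>\<in>Lstar P le w n alpha. f_sigma P w alpha \<sigma> = f"
proof -
  have fPE: "f \<in> P \<rightarrow>\<^sub>E {1..l}" using f by (simp add: Ostar_def)
  have fP: "\<And>x. x \<in> P \<Longrightarrow> f x \<in> {1..l}" using fPE by (auto simp: PiE_iff)
  have fext: "f \<in> extensional P" using fPE by (simp add: PiE_iff)
  have fmono: "\<And>x y. x\<in>P \<Longrightarrow> y\<in>P \<Longrightarrow> le x y \<Longrightarrow> f x \<le> f y" using f by (simp add: Ostar_def)
  have fcard: "\<And>i. i\<in>{1..l} \<Longrightarrow> card {x\<in>P. f x = i} = alpha ! (i - 1)" using f by (simp add: Ostar_def)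
  have fum: "\<And>i. i\<in>{1..l} \<Longrightarrow> unique_minimal le {x\<in>P. f x = i}" using f by (simp add: Ostar_def)
  have cnt: "\<And>c. c \<le> l \<Longrightarrow> card {y\<in>P. f y \<le> c} = S c"
  proof -
    fix c show "c \<le> l \<Longrightarrow> card {y\<in>P. f y \<le> c} = S c"
    proof (induction c)
      case 0
      have "{y\<in>P. f y \<le> 0} = {}" using fP by fastforce
      then show ?case using S_0 by (metis card.empty)
    next
      case (Suc c)
      have un: "{y\<in>P. f y \<le> Suc c} = {y\<in>P. f y \<le> c} \<union> {y\<in>P. f y = Suc c}" by auto
      have "card ({y\<in>P. f y \<le> c} \<union> {y\<in>P. f y = Suc c}) = card {y\<in>P. f y \<le> c} + card {y\<in>P. f y = Suc c}"
        by (rule card_Un_disjoint) (use finP in auto)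
      moreover have "card {y\<in>P. f y = Suc c} = alpha ! c" using fcard[of "Suc c"] Suc.prems by simp
      moreover have "S (Suc c) = S c + alpha ! c" using S_Suc Suc.prems by simp
      ultimately show ?case using un Suc by simp
    qed
  qed
  define \<tau> where "\<tau> x = 1 + card {y\<in>P. key f y < key f x}" for x
  have tmono: "\<And>x y. x\<in>P \<Longrightarrow> y\<in>P \<Longrightarrow> key f x < key f y \<Longrightarrow> \<tau> x < \<tau> y"
  proof -
    fix x y assume xy: "x\<in>P" "y\<in>P" "key f x < key f y"
    have "{z\<in>P. key f z < key f x} \<subset> {z\<in>P. key f z < key f y}" using xy by auto
    then have "card {z\<in>P. key f z < key f x} < card {z\<in>P. key f z < key f y}"
      by (rule psubset_card_mono[rotated]) (use finP in auto)
    then show "\<tau> x < \<tau> y" by (simp add: \<tau>_def)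
  qed
  have trange: "\<And>x. x \<in> P \<Longrightarrow> \<tau> x \<in> {1..n}"
  proof -
    fix x assume x: "x \<in> P"
    have "{z\<in>P. key f z < key f x} \<subseteq> P - {x}" by auto
    then have "card {z\<in>P. key f z < key f x} \<le> card (P - {x})" by (rule card_mono[rotated]) (use finP in auto)
    also have "\<dots> = n - 1" using x finP cardP by simp
    finally have "card {z\<in>P. key f z < key f x} \<le> n - 1" .
    moreover have "n \<ge> 1" using x finP cardP card_gt_0_iff[of P] by auto
    ultimately show "\<tau> x \<in> {1..n}" by (simp add: \<tau>_def)
  qed
  have tinj: "inj_on \<tau> P"
  proof (rule inj_onI)
    fix x y assume xy: "x \<in> P" "y \<in> P" "\<tau> x = \<tau> y"
    show "x = y"
    proof (rule ccontr)
      assume "x \<noteq> y"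
      then have "key f x \<noteq> key f y" using key_inj xy inj_onD by metis
      then have "key f x < key f y \<or> key f y < key f x" by auto
      then show False using tmono[OF xy(1,2)] tmono[OF xy(2,1)] xy(3) by auto
    qed
  qed
  have tbij: "bij_betw \<tau> P {1..n}"
  proof -
    have "\<tau> ` P \<subseteq> {1..n}" using trange by auto
    moreover have "card (\<tau> ` P) = card {1..n}" using card_image[OF tinj] cardP by simp
    ultimately have "\<tau> ` P = {1..n}" by (intro card_subset_eq) auto
    then show ?thesis using tinj by (simp add: bij_betw_def)
  qed
  have tblock: "\<And>x. x \<in> P \<Longrightarrow> \<tau> x \<in> block alpha (f x)"
  proof -
    fix x assume x: "x \<in> P"
    have fx: "f x \<in> {1..l}" using fP[OF x] .
    have split: "{y\<in>P. key f y < key f x} = {y\<in>P. f y \<le> f x - 1} \<union> {y\<in>P. f y = f x \<and> w y < w x}"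
      using key_less x fx by auto
    have c: "card {y\<in>P. key f y < key f x} = S (f x - 1) + card {y\<in>P. f y = f x \<and> w y < w x}"
    proof -
      have "card ({y\<in>P. f y \<le> f x - 1} \<union> {y\<in>P. f y = f x \<and> w y < w x})
          = card {y\<in>P. f y \<le> f x - 1} + card {y\<in>P. f y = f x \<and> w y < w x}"
        by (rule card_Un_disjoint) (use finP fx in auto)
      moreover have "f x - 1 \<le> l" using fx by auto
      ultimately show ?thesis using split cnt[of "f x - 1"] by simp
    qed
    have "{y\<in>P. f y = f x \<and> w y < w x} \<subset> {y\<in>P. f y = f x}" using x by auto
    then have "card {y\<in>P. f y = f x \<and> w y < w x} < card {y\<in>P. f y = f x}"
      by (rule psubset_card_mono[rotated]) (use finP in auto)
    then have lt: "card {y\<in>P. f y = f x \<and> w y < w x} < alpha ! (f x - 1)" using fcard[OF fx] by simp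
    have "S (f x) = S (f x - 1) + alpha ! (f x - 1)" by (rule S_im[OF fx])
    then show "\<tau> x \<in> block alpha (f x)" using c lt by (simp add: \<tau>_def block_eq)
  qed
  have tblk: "blk (\<tau> x) = f x" if "x \<in> P" for x using blk_eq[OF fP[OF that] tblock[OF that]] .
  define \<sigma> where "\<sigma> j = (if j \<in> {1..n} then w (inv_into P \<tau> j) else j)" for j
  have sbij: "bij_betw \<sigma> {1..n} {1..n}"
  proof -
    have "bij_betw (w \<circ> inv_into P \<tau>) {1..n} {1..n}"
      by (rule bij_betw_trans[OF bij_betw_inv_into[OF tbij] bijw])
    then show ?thesis by (rule bij_betw_cong[THEN iffD1, rotated]) (simp add: \<sigma>_def)
  qed
  have sout: "\<sigma> x = x" if "x \<notin> {1..n}" for x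
    unfolding \<sigma>_def using that by (rule if_not_P)
  have p: "\<sigma> permutes {1..n}" by (rule bij_imp_permutes[OF sbij sout])
  have st: "\<sigma> (\<tau> x) = w x" if x: "x \<in> P" for x
  proof -
    have "\<sigma> (\<tau> x) = w (inv_into P \<tau> (\<tau> x))" unfolding \<sigma>_def using trange[OF x] by (rule if_P)
    also have "inv_into P \<tau> (\<tau> x) = x" by (rule inv_into_f_f[OF tinj x])
    finally show ?thesis .
  qed
  have pos: "inv \<sigma> (w x) = \<tau> x" if "x \<in> P" for x using st[OF that] permutes_inv_eq[OF p] by blast
  have tonto: "\<exists>x\<in>P. \<tau> x = j" if "j \<in> {1..n}" for j
  proof -
    have "j \<in> \<tau> ` P" using tbij that by (simp add: bij_betw_def)
    then show ?thesis by blast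
  qed
  have fs: "f_sigma P w alpha \<sigma> = f"
  proof
    fix x show "f_sigma P w alpha \<sigma> x = f x"
    proof (cases "x \<in> P")
      case True
      have "f_sigma P w alpha \<sigma> x = blk (inv \<sigma> (w x))" by (rule fsig_eq[OF p True])
      also have "inv \<sigma> (w x) = \<tau> x" by (rule pos[OF True])
      also have "blk (\<tau> x) = f x" by (rule tblk[OF True])
      finally show ?thesis .
    next
      case False
      have "f_sigma P w alpha \<sigma> x = undefined" unfolding f_sigma_def using False by simp
      moreover have "f x = undefined" using fext False by (rule extensional_arb)
      ultimately show ?thesis by simp
    qed
  qed
  have le_ext: "\<forall>x\<in>P. \<forall>y\<in>P. le x y \<and> x \<noteq> y \<longrightarrow> inv \<sigma> (w x) < inv \<sigma> (w y)"
  proof (intro ballI impI)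
    fix x y assume xy: "x \<in> P" "y \<in> P" "le x y \<and> x \<noteq> y"
    have "f x \<le> f y" using fmono[OF xy(1,2)] xy(3) by blast
    moreover have "w x < w y" using natl[OF xy(1,2)] xy(3) by blast
    ultimately have "f x < f y \<or> (f x = f y \<and> w x < w y)" by linarith
    then have "key f x < key f y" by (rule key_less[OF xy(1,2), THEN iffD2])
    then have "\<tau> x < \<tau> y" by (rule tmono[OF xy(1,2)])
    then show "inv \<sigma> (w x) < inv \<sigma> (w y)" by (simp only: pos[OF xy(1)] pos[OF xy(2)])
  qed
  have um: "alpha_unimodal alpha \<sigma>" unfolding alpha_unimodal_def
  proof
    fix i assume i: "i \<in> {1..l}"
    show "\<exists>k\<in>block alpha i.
          (\<forall>j. j \<in> block alpha i \<and> j + 1 \<in> block alpha i \<and> j < k \<longrightarrow> \<sigma> j > \<sigma> (j + 1)) \<and>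
          (\<forall>j. j \<in> block alpha i \<and> j + 1 \<in> block alpha i \<and> k \<le> j \<longrightarrow> \<sigma> j < \<sigma> (j + 1))"
    proof (intro bexI[OF _ block_ne[OF i]] conjI allI impI)
      fix j assume "j \<in> block alpha i \<and> j + 1 \<in> block alpha i \<and> j < S (i - 1) + 1"
      then show "\<sigma> j > \<sigma> (j + 1)" by (simp add: block_eq)
    next
      fix j assume j: "j \<in> block alpha i \<and> j + 1 \<in> block alpha i \<and> S (i - 1) + 1 \<le> j"
      have jn: "j \<in> {1..n}" "j+1 \<in> {1..n}" using j block_sub[OF i] by auto
      obtain x where x: "x \<in> P" "\<tau> x = j" using tonto[OF jn(1)] by blast
      obtain y where y: "y \<in> P" "\<tau> y = j+1" using tonto[OF jn(2)] by blast
      have "blk j = i" using blk_eq[OF i] j by blast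
      then have fx: "f x = i" using tblk[OF x(1)] x(2) by simp
      have "blk (j+1) = i" using blk_eq[OF i] j by blast
      then have fy: "f y = i" using tblk[OF y(1)] y(2) by simp
      have "key f x < key f y"
      proof (rule ccontr)
        assume "\<not> ?thesis"
        then have "key f y < key f x \<or> key f y = key f x" by auto
        then show False
        proof
          assume "key f y < key f x" then show False using tmono[OF y(1) x(1)] x(2) y(2) by simp
        next
          assume "key f y = key f x" then have "y = x" using key_inj x y inj_onD by metis
          then show False using x y by simp
        qed
      qed
      then have "w x < w y" using key_less[OF x(1) y(1)] fx fy by simp
      then show "\<sigma> j < \<sigma> (j + 1)" using st[OF x(1)] st[OF y(1)] x(2) y(2) by simp
    qed
  qed
  have uq: "\<forall>i\<in>{1..l}. unique_minimal le (part_set P w alpha \<sigma> i)"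
  proof
    fix i assume i: "i \<in> {1..l}"
    have "part_set P w alpha \<sigma> i = {x\<in>P. f x = i}" using fiber_eq[OF p i] fs by simp
    then show "unique_minimal le (part_set P w alpha \<sigma> i)" using fum[OF i] by simp
  qed
  have "\<sigma> \<in> Lstar P le w n alpha" using p le_ext um uq by (simp add: Lstar_def lin_ext_def)
  then show ?thesis using fs by blast
qed

end

theorem proposition5p1:
  fixes P :: "'a set" and le :: "'a \<Rightarrow> 'a \<Rightarrow> bool" and w :: "'a \<Rightarrow> nat"
    and n :: nat and alpha :: "nat list"
  assumes "labeled_poset P le w n"
    and "naturally_labeled P le w"
    and "is_composition alpha n"
  shows "bij_betw (f_sigma P w alpha) (Lstar P le w n alpha) (Ostar P le alpha)"
proof -
  interpret c: ctx P le w n alpha using assms by (unfold_locales)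
  show ?thesis unfolding bij_betw_def
  proof
    show "inj_on (f_sigma P w alpha) (Lstar P le w n alpha)"
      by (rule inj_onI) (rule c.sig_det)
    show "f_sigma P w alpha ` Lstar P le w n alpha = Ostar P le alpha"
    proof
      show "f_sigma P w alpha ` Lstar P le w n alpha \<subseteq> Ostar P le alpha"
        using c.Lstar_to_Ostar by blast
      show "Ostar P le alpha \<subseteq> f_sigma P w alpha ` Lstar P le w n alpha"
      proof
        fix f assume "f \<in> Ostar P le alpha"
        then obtain \<sigma> where "\<sigma> \<in> Lstar P le w n alpha" "f_sigma P w alpha \<sigma> = f"
          using c.Ostar_surj by blast
        then show "f \<in> f_sigma P w alpha ` Lstar P le w n alpha" by force
      qed
    qed
  qed
qed

end
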